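(* The path functor $P:\mathsf{RSRel}\to\mathsf{Met}$ is fully faithful and is left adjoint to the functor $Q:\mathsf{Met}\to\mathsf{RSRel}$.
   Context: $\mathsf{RSRel}$: objects are pairs $X=(|X|,\sim_X)$ of a set and a reflexive symmetric relation on it; morphisms are functions $f$ with $x\sim x'\Rightarrow f(x)\sim f(x')$. $\mathsf{Met}$: objects are extended pseudo-metric spaces $(|X|,d)$ with $d:|X|\times|X|\to[0,\infty]$, $d(x,x)=0$, symmetric, satisfying the triangle inequality; morphisms are non-expansive maps ($d(f(x),f(y))\le d(x,y)$). For $X\in\mathsf{RSRel}$, $PX$ is $|X|$ with the path metric: $d(x,x')$ is the least $k$ such that there are $x_0=x,x_1,\dots,x_k=x'$ with $x_i\sim x_{i+1}$ for all $i<k$, and $\infty$ if no such sequence exists; $P$ is the identity on morphisms. For $Y\in\mathsf{Met}$, $QY=(|Y|,\{(y,y'):d(y,y')\le1\})$, and $Q$ is the identity on morphisms. *)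

theory Defs
  imports "HOL-Library.Extended_Nonnegative_Real"
begin

definition rsrel :: "'a set \<Rightarrow> ('a \<Rightarrow> 'a \<Rightarrow> bool) \<Rightarrow> bool" where
  "rsrel A R \<longleftrightarrow> (\<forall>x\<in>A. R x x) \<and> (\<forall>x\<in>A. \<forall>y\<in>A. R x y \<longrightarrow> R y x)"

definition rsrel_hom :: "'a set \<Rightarrow> ('a \<Rightarrow> 'a \<Rightarrow> bool) \<Rightarrow> 'b set \<Rightarrow> ('b \<Rightarrow> 'b \<Rightarrow> bool) \<Rightarrow> ('a \<Rightarrow> 'b) \<Rightarrow> bool" where
  "rsrel_hom A R B S f \<longleftrightarrow> f \<in> A \<rightarrow> B \<and> (\<forall>x\<in>A. \<forall>y\<in>A. R x y \<longrightarrow> S (f x) (f y))"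

definition met :: "'a set \<Rightarrow> ('a \<Rightarrow> 'a \<Rightarrow> ennreal) \<Rightarrow> bool" where
  "met A d \<longleftrightarrow> (\<forall>x\<in>A. d x x = 0) \<and> (\<forall>x\<in>A. \<forall>y\<in>A. d x y = d y x)
     \<and> (\<forall>x\<in>A. \<forall>y\<in>A. \<forall>z\<in>A. d x z \<le> d x y + d y z)"

definition met_hom :: "'a set \<Rightarrow> ('a \<Rightarrow> 'a \<Rightarrow> ennreal) \<Rightarrow> 'b set \<Rightarrow> ('b \<Rightarrow> 'b \<Rightarrow> ennreal) \<Rightarrow> ('a \<Rightarrow> 'b) \<Rightarrow> bool" where
  "met_hom A d B e f \<longleftrightarrow> f \<in> A \<rightarrow> B \<and> (\<forall>x\<in>A. \<forall>y\<in>A. e (f x) (f y) \<le> d x y)"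

text \<open>Path metric of P: least length k of a chain x = x_0 ~ x_1 ~ ... ~ x_k = x' in the carrier;
  the infimum of the empty set is \<infinity>.\<close>
definition path_dist :: "'a set \<Rightarrow> ('a \<Rightarrow> 'a \<Rightarrow> bool) \<Rightarrow> 'a \<Rightarrow> 'a \<Rightarrow> ennreal" where
  "path_dist A R x y = Inf {of_nat k | k. \<exists>p :: nat \<Rightarrow> 'a. p 0 = x \<and> p k = y
       \<and> (\<forall>i\<le>k. p i \<in> A) \<and> (\<forall>i<k. R (p i) (p (Suc i)))}"

definition Q_rel :: "('a \<Rightarrow> 'a \<Rightarrow> ennreal) \<Rightarrow> 'a \<Rightarrow> 'a \<Rightarrow> bool" where
  "Q_rel d y y' \<longleftrightarrow> d y y' \<le> 1"

end

theory Submission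
  imports Defs
begin

definition chn :: "'a set \<Rightarrow> ('a \<Rightarrow> 'a \<Rightarrow> bool) \<Rightarrow> 'a \<Rightarrow> 'a \<Rightarrow> nat \<Rightarrow> bool" where
  "chn A R x y k \<longleftrightarrow> (\<exists>p :: nat \<Rightarrow> 'a. p 0 = x \<and> p k = y
       \<and> (\<forall>i\<le>k. p i \<in> A) \<and> (\<forall>i<k. R (p i) (p (Suc i))))"

lemma pd_def2: "path_dist A R x y = Inf {of_nat k | k. chn A R x y k}"
  unfolding path_dist_def chn_def by simp

lemma pd_lower: "chn A R x y k \<Longrightarrow> path_dist A R x y \<le> of_nat k"
  unfolding pd_def2 by (rule Inf_lower) blast

lemma pd_cases:
  "(path_dist A R x y = top \<and> (\<forall>k. \<not> chn A R x y k)) \<or>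
   (\<exists>k. chn A R x y k \<and> path_dist A R x y = of_nat k)"
proof (cases "\<exists>k. chn A R x y k")
  case False
  then have "{of_nat k | k. chn A R x y k} = ({} :: ennreal set)" by auto
  then show ?thesis using False unfolding pd_def2 by simp
next
  case True
  define m where "m = (LEAST k. chn A R x y k)"
  have m: "chn A R x y m" using True unfolding m_def by (metis LeastI)
  have "path_dist A R x y = of_nat m"
  proof (rule antisym)
    show "path_dist A R x y \<le> of_nat m" using pd_lower[OF m] .
    show "of_nat m \<le> path_dist A R x y" unfolding pd_def2
      by (rule Inf_greatest) (auto simp: m_def intro: Least_le)
  qed
  then show ?thesis using m by blast
qed

lemma pd_le_chn: "path_dist A R x y \<le> of_nat k \<Longrightarrow> \<exists>j\<le>k. chn A R x y j"
  using pd_cases[of A R x y] by (auto simp: of_nat_le_iff top_unique)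

lemma chn_ends: "chn A R x y k \<Longrightarrow> x \<in> A \<and> y \<in> A"
  unfolding chn_def by auto

lemma chn_0: "chn A R x y 0 \<longleftrightarrow> x \<in> A \<and> x = y"
  unfolding chn_def by auto

lemma chn_1: "chn A R x y 1 \<longleftrightarrow> x \<in> A \<and> y \<in> A \<and> R x y"
proof
  assume "chn A R x y 1" then show "x \<in> A \<and> y \<in> A \<and> R x y"
    unfolding chn_def by auto
next
  assume h: "x \<in> A \<and> y \<in> A \<and> R x y"
  show "chn A R x y 1" unfolding chn_def
    by (rule exI[of _ "\<lambda>i. if i = 0 then x else y"]) (use h in \<open>auto simp: le_Suc_eq\<close>)
qed

lemma chn_sym: "rsrel A R \<Longrightarrow> chn A R x y k \<Longrightarrow> chn A R y x k"
proof -
  assume r: "rsrel A R" and "chn A R x y k"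
  then obtain p where p: "p 0 = x" "p k = y" "\<forall>i\<le>k. p i \<in> A" "\<forall>i<k. R (p i) (p (Suc i))"
    unfolding chn_def by blast
  show ?thesis unfolding chn_def
  proof (rule exI[of _ "\<lambda>i. p (k - i)"], intro conjI allI impI)
    fix i assume i: "i < k"
    have "R (p (k - Suc i)) (p (Suc (k - Suc i)))" using p(4) i by auto
    moreover have "Suc (k - Suc i) = k - i" using i by auto
    moreover have "p (k - Suc i) \<in> A" "p (k - i) \<in> A" using p(3) by auto
    ultimately show "R (p (k - i)) (p (k - Suc i))" using r unfolding rsrel_def by metis
  qed (use p in auto)
qed

lemma chn_trans: "chn A R x y k \<Longrightarrow> chn A R y z m \<Longrightarrow> chn A R x z (k + m)"
proof -
  assume "chn A R x y k" "chn A R y z m"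
  then obtain p q where p: "p 0 = x" "p k = y" "\<forall>i\<le>k. p i \<in> A" "\<forall>i<k. R (p i) (p (Suc i))"
    and q: "q 0 = y" "q m = z" "\<forall>i\<le>m. q i \<in> A" "\<forall>i<m. R (q i) (q (Suc i))"
    unfolding chn_def by blast
  show ?thesis unfolding chn_def
  proof (rule exI[of _ "\<lambda>i. if i \<le> k then p i else q (i - k)"], intro conjI allI impI)
    fix i assume i: "i < k + m"
    show "R (if i \<le> k then p i else q (i - k)) (if Suc i \<le> k then p (Suc i) else q (Suc i - k))"
    proof (cases "i < k")
      case True then show ?thesis using p by auto
    next
      case False
      then have "Suc i - k = Suc (i - k)" by auto
      then show ?thesis using False q i p(2) by (cases "i = k") auto
    qed
  qed (use p q in auto)
qed

lemma chn_map: "rsrel_hom A R B S f \<Longrightarrow> chn A R x y k \<Longrightarrow> chn B S (f x) (f y) k"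
proof -
  assume h: "rsrel_hom A R B S f" and "chn A R x y k"
  then obtain p where p: "p 0 = x" "p k = y" "\<forall>i\<le>k. p i \<in> A" "\<forall>i<k. R (p i) (p (Suc i))"
    unfolding chn_def by blast
  show ?thesis unfolding chn_def
    by (rule exI[of _ "f \<circ> p"]) (use p h in \<open>auto simp: rsrel_hom_def Pi_def\<close>)
qed

lemma chn_bound:
  assumes m: "met B e" and h: "rsrel_hom A R B (Q_rel e) f" and c: "chn A R x y k"
  shows "e (f x) (f y) \<le> of_nat k"
proof -
  obtain p where p: "p 0 = x" "p k = y" "\<forall>i\<le>k. p i \<in> A" "\<forall>i<k. R (p i) (p (Suc i))"
    using c unfolding chn_def by blast
  have "\<forall>j\<le>k. e (f (p 0)) (f (p j)) \<le> of_nat j"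
  proof (intro allI)
    fix j show "j \<le> k \<longrightarrow> e (f (p 0)) (f (p j)) \<le> of_nat j"
    proof (induction j)
      case 0
      have "f (p 0) \<in> B" using p h unfolding rsrel_hom_def by auto
      then show ?case using m unfolding met_def by auto
    next
      case (Suc j)
      show ?case
      proof
        assume j: "Suc j \<le> k"
        have B: "f (p 0) \<in> B" "f (p j) \<in> B" "f (p (Suc j)) \<in> B"
          using p h j unfolding rsrel_hom_def by auto
        have "e (f (p j)) (f (p (Suc j))) \<le> 1"
          using h p j unfolding rsrel_hom_def Q_rel_def by auto
        moreover have "e (f (p 0)) (f (p j)) \<le> of_nat j" using Suc j by auto
        moreover have "e (f (p 0)) (f (p (Suc j))) \<le> e (f (p 0)) (f (p j)) + e (f (p j)) (f (p (Suc j)))"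
          using m B unfolding met_def by blast
        ultimately have "e (f (p 0)) (f (p (Suc j))) \<le> of_nat j + 1"
          by (meson add_mono order_trans)
        then show "e (f (p 0)) (f (p (Suc j))) \<le> of_nat (Suc j)" by (simp add: add.commute)
      qed
    qed
  qed
  then show ?thesis using p by auto
qed

lemma P_met: "rsrel A R \<Longrightarrow> met A (path_dist A R)"
proof -
  assume r: "rsrel A R"
  have sym: "path_dist A R y x \<le> path_dist A R x y" for x y
    unfolding pd_def2[of A R x y]
    by (rule Inf_greatest) (auto intro: pd_lower chn_sym[OF r])
  have tri: "path_dist A R x z \<le> path_dist A R x y + path_dist A R y z" for x y z
    using pd_cases[of A R x y] pd_cases[of A R y z]
    by (auto simp flip: of_nat_add intro: pd_lower[OF chn_trans])
  have z: "x \<in> A \<Longrightarrow> path_dist A R x x = 0" for x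
    using pd_lower[of A R x x 0] chn_0[of A R x x] by simp
  show ?thesis unfolding met_def
    using sym tri z by (auto intro: antisym)
qed

theorem theorem5:
  fixes A :: "'a set" and R :: "'a \<Rightarrow> 'a \<Rightarrow> bool" and d :: "'a \<Rightarrow> 'a \<Rightarrow> ennreal"
    and B :: "'b set" and S :: "'b \<Rightarrow> 'b \<Rightarrow> bool" and e :: "'b \<Rightarrow> 'b \<Rightarrow> ennreal"
    and f :: "'a \<Rightarrow> 'b"
  shows
    \<comment> \<open>P and Q are well defined on objects\<close>
    "(rsrel A R \<longrightarrow> met A (path_dist A R))
   \<and> (met B e \<longrightarrow> rsrel B (Q_rel e))
   \<comment> \<open>Q is well defined on morphisms\<close>
   \<and> (met A d \<longrightarrow> met B e \<longrightarrow> met_hom A d B e f \<longrightarrow> rsrel_hom A (Q_rel d) B (Q_rel e) f)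
   \<comment> \<open>P is well defined on morphisms and fully faithful (P is the identity on maps)\<close>
   \<and> (rsrel A R \<longrightarrow> rsrel B S \<longrightarrow>
        (rsrel_hom A R B S f \<longleftrightarrow> met_hom A (path_dist A R) B (path_dist B S) f))
   \<comment> \<open>adjunction P -| Q: Met(PX, Y) = RSRel(X, QY), the identity bijection (natural)\<close>
   \<and> (rsrel A R \<longrightarrow> met B e \<longrightarrow>
        (met_hom A (path_dist A R) B e f \<longleftrightarrow> rsrel_hom A R B (Q_rel e) f))"
proof (intro conjI impI)
  show "rsrel A R \<Longrightarrow> met A (path_dist A R)" by (rule P_met)
  show "met B e \<Longrightarrow> rsrel B (Q_rel e)"
    unfolding met_def rsrel_def Q_rel_def by auto
  show "met_hom A d B e f \<Longrightarrow> rsrel_hom A (Q_rel d) B (Q_rel e) f"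
    unfolding met_hom_def rsrel_hom_def Q_rel_def by (meson order_trans)
next
  assume rA: "rsrel A R" and rB: "rsrel B S"
  show "rsrel_hom A R B S f \<longleftrightarrow> met_hom A (path_dist A R) B (path_dist B S) f"
  proof
    assume h: "rsrel_hom A R B S f"
    have "path_dist B S (f x) (f y) \<le> path_dist A R x y" for x y
      unfolding pd_def2[of A R x y]
      by (rule Inf_greatest) (auto intro: pd_lower chn_map[OF h])
    then show "met_hom A (path_dist A R) B (path_dist B S) f"
      using h unfolding met_hom_def rsrel_hom_def by auto
  next
    assume h: "met_hom A (path_dist A R) B (path_dist B S) f"
    have "S (f x) (f y)" if x: "x \<in> A" "y \<in> A" "R x y" for x y
    proof -
      have "chn A R x y 1" using x by (intro chn_1[THEN iffD2]) simp
      then have "path_dist A R x y \<le> of_nat 1" by (rule pd_lower)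
      moreover have "path_dist B S (f x) (f y) \<le> path_dist A R x y"
        using h x unfolding met_hom_def by blast
      ultimately have "path_dist B S (f x) (f y) \<le> of_nat 1" by (rule order_trans[rotated])
      then obtain j where j: "j \<le> 1" "chn B S (f x) (f y) j" by (rule pd_le_chn[THEN exE]) blast
      then consider "j = 0" | "j = 1" by linarith
      then show ?thesis
      proof cases
        case 1
        then have "f x \<in> B" "f x = f y" using j(2) chn_0[of B S] by auto
        then show ?thesis using rB unfolding rsrel_def by auto
      next
        case 2
        then show ?thesis using j(2) chn_1[of B S] by auto
      qed
    qed
    then show "rsrel_hom A R B S f" using h unfolding met_hom_def rsrel_hom_def by auto
  qed
next
  assume rA: "rsrel A R" and mB: "met B e"
  show "met_hom A (path_dist A R) B e f \<longleftrightarrow> rsrel_hom A R B (Q_rel e) f"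
  proof
    assume h: "met_hom A (path_dist A R) B e f"
    have "Q_rel e (f x) (f y)" if x: "x \<in> A" "y \<in> A" "R x y" for x y
    proof -
      have "chn A R x y 1" using x by (intro chn_1[THEN iffD2]) simp
      then have "path_dist A R x y \<le> of_nat 1" by (rule pd_lower)
      moreover have "e (f x) (f y) \<le> path_dist A R x y"
        using h x unfolding met_hom_def by blast
      ultimately have "e (f x) (f y) \<le> of_nat 1" by (rule order_trans[rotated])
      then show ?thesis unfolding Q_rel_def by simp
    qed
    then show "rsrel_hom A R B (Q_rel e) f" using h unfolding met_hom_def rsrel_hom_def by auto
  next
    assume h: "rsrel_hom A R B (Q_rel e) f"
    have "e (f x) (f y) \<le> path_dist A R x y" for x y
      using pd_cases[of A R x y] chn_bound[OF mB h] by auto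
    then show "met_hom A (path_dist A R) B e f"
      using h unfolding met_hom_def rsrel_hom_def by auto
  qed
qed

end
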